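(* Let $O\rhd c_1$ and $O\rhd c_2$ be P-markings. Then $O\rhd c_1\sim_{C}O\rhd c_2$ if and only if $[O]_\cong\rhd c_1\alpha_O\sim_{AC}[O]_\cong\rhd c_2\alpha_O$.
   Context: Fix a set $Act$ of action labels and an infinite set $\mathcal{E}$ of event names. A finite $Act$-labelled poset (poset for short) is $O=(X_O,\preccurlyeq_O,l_O)$ with $X_O\subseteq\mathcal{E}$ finite, $\preccurlyeq_O$ a partial order on $X_O$, $l_O\colon X_O\to Act$; $|O|=\{(x,l_O(x)):x\in X_O\}$, $x_a$ denotes $(x,a)$, and $O$ is also regarded as a poset on $|O|$. A morphism is an order- and label-preserving map, acting on labelled events by $\sigma(x_a)=\sigma(x)_a$; an isomorphism is a bijective morphism with morphism inverse. For $K\subseteq|O|$, $\max_O K$ is its set of maximal elements; $K$ is down-closed if $y\in K$, $x\preccurlyeq_O y$ imply $x\in K$. A net $N=(S,T,F,l)$: disjoint sets $S,T$, $F\subseteq(S\times T)\cup(T\times S)$, $l\colon T\to Act$, ${}^\bullet t=\{s:(s,t)\in F\}$, $t^\bullet=\{s:(t,s)\in F\}$ nonempty. Fix $N$. A causal marking is a finite set $c$ of pairs $K\vdash s$ ($s\in S$, $K$ finite $\subseteq\mathcal{E}\times Act$); $\mathcal{K}(c)$ is the union of its cause sets, $|c|$ its set of places, $K\vdash m=\{K\vdash s:s\in m\}$, and $c\sigma=\{\sigma(K)\vdash s:K\vdash s\in c\}$. A P-marking $O\rhd c$: every cause set of $c$ is a down-closed subset of $|O|$. $\delta(O,K,e_a)$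 (for $K\subseteq|O|$, $e\notin X_O$) is $O$ plus the event $e$ with label $a$ above every element of $K$, reflexively-transitively closed. Concrete causal case graph (CG$_C$): smallest transition relation on P-markings with $O\rhd c\cup c'\xrightarrow{K\vdash e_a}\delta(O,K,e_a)\rhd(\mathcal{K}(c)\cup\{e_a\}\vdash t^\bullet)\cup c'$ whenever $t\in T$, $O\rhd c\cup c'$ is a P-marking, $|c|={}^\bullet t$, $a=l(t)$, $e\in\mathcal{E}\setminus X_O$, $K=\max_O\mathcal{K}(c)$. A concrete causal bisimulation is a family $\{R_O\}$ of relations on P-markings indexed by posets such that: if $(O_1\rhd c_1,O_2\rhd c_2)\in R_O$ then $O_1=O_2=O$; and if $(O\rhd c_1,O\rhd c_2)\in R_O$ and $O\rhd c_1\xrightarrow{K\vdash e_a}O'\rhd c_1'$ then $O\rhd c_2\xrightarrow{K\vdash e_a}O'\rhd c_2'$ for some $c_2'$ with $(O'\rhd c_1',O'\rhd c_2')\in R_{O'}$, and vice versa. $\sim_C$ is the greatest one. Abstract setting: for each poset $O$ fix a canonical representative $[O]_\cong$ of its isomorphism class and an isomorphism $\alpha_O\colon O\to[O]_\cong$; $O$ is abstract if $[O]_\cong=O$, and an abstract P-marking is one whose poset is abstract. For abstract $O$, $K\subseteq|O|$, $a\in Act$: $\delta(O,K,a)=[\delta(O,K,e_a)]_\cong$ (any $e\notin X_O$), $new(O,K,a)$ is the element of $\delta(O,K,a)$ corresponding to the added event and $old(O,K,a)\colon O\to\delta(O,K,a)$ the embedding corresponding to the inclusion of $O$ (fixed choices).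 For a CG$_C$ transition $O\rhd c\xrightarrow{K\vdash e_a}\delta(O,K,e_a)\rhd c'$, let $c'_{O,K,e_a}$ be $c'$ renamed by the isomorphism $\delta(O,K,e_a)\to\delta([O]_\cong,\alpha_O(K),a)$ sending $x\in X_O$ to $old([O]_\cong,\alpha_O(K),a)(\alpha_O(x))$ and $e_a$ to $new([O]_\cong,\alpha_O(K),a)$. The abstract causal case graph (CG$_{AC}$) has a transition $[O]_\cong\rhd c\alpha_O\stackrel{\alpha_O(K)\vdash a}{\Longrightarrow}\delta([O]_\cong,\alpha_O(K),a)\rhd c'_{O,K,e_a}$ for each such CG$_C$ transition. An abstract causal bisimulation is a family $\{R_O\}$ indexed by abstract posets of relations on abstract P-markings such that: $(O_1\rhd c_1,O_2\rhd c_2)\in R_O$ implies $O_1=O_2=O$; and if $(O\rhd c_1,O\rhd c_2)\in R_O$ and $O\rhd c_1\stackrel{K\vdash a}{\Longrightarrow}O'\rhd c_1'$ then $O\rhd c_2\stackrel{K\vdash a}{\Longrightarrow}O'\rhd c_2'$ with $(O'\rhd c_1',O'\rhd c_2')\in R_{O'}$, and vice versa. $\sim_{AC}$ is the greatest one. *)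

theory Defs
  imports Main
begin

text \<open>A finite Act-labelled poset is represented by its set of labelled events |Q|
  (pairs (x,a), at most one label per event name) together with its order on |Q|.\<close>

type_synonym ('e,'a) poset = "('e \<times> 'a) set \<times> (('e \<times> 'a) \<times> ('e \<times> 'a)) set"

definition evs :: "('e,'a) poset \<Rightarrow> ('e \<times> 'a) set" where
  "evs Q = fst Q"

definition ordr :: "('e,'a) poset \<Rightarrow> (('e \<times> 'a) \<times> ('e \<times> 'a)) set" where
  "ordr Q = snd Q"

definition names :: "('e,'a) poset \<Rightarrow> 'e set" where
  "names Q = fst ` evs Q"

definition wf_poset :: "('e,'a) poset \<Rightarrow> bool" where
  "wf_poset Q \<longleftrightarrow> finite (evs Q) \<and> inj_on fst (evs Q)
     \<and> ordr Q \<subseteq> evs Q \<times> evs Q \<and> partial_order_on (evs Q) (ordr Q)"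

definition lift :: "('e \<Rightarrow> 'e) \<Rightarrow> 'e \<times> 'a \<Rightarrow> 'e \<times> 'a" where
  "lift \<sigma> p = (\<sigma> (fst p), snd p)"

definition morphism :: "('e \<Rightarrow> 'e) \<Rightarrow> ('e,'a) poset \<Rightarrow> ('e,'a) poset \<Rightarrow> bool" where
  "morphism \<sigma> Q Q' \<longleftrightarrow> (\<forall>p\<in>evs Q. lift \<sigma> p \<in> evs Q')
     \<and> (\<forall>(p,q)\<in>ordr Q. (lift \<sigma> p, lift \<sigma> q) \<in> ordr Q')"

definition iso :: "('e \<Rightarrow> 'e) \<Rightarrow> ('e,'a) poset \<Rightarrow> ('e,'a) poset \<Rightarrow> bool" where
  "iso \<sigma> Q Q' \<longleftrightarrow> bij_betw \<sigma> (names Q) (names Q') \<and> morphism \<sigma> Q Q'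
     \<and> morphism (inv_into (names Q) \<sigma>) Q' Q"

definition maxO :: "('e,'a) poset \<Rightarrow> ('e \<times> 'a) set \<Rightarrow> ('e \<times> 'a) set" where
  "maxO Q K = {k \<in> K. \<not> (\<exists>k'\<in>K. (k, k') \<in> ordr Q \<and> k \<noteq> k')}"

definition down_closed :: "('e,'a) poset \<Rightarrow> ('e \<times> 'a) set \<Rightarrow> bool" where
  "down_closed Q K \<longleftrightarrow> K \<subseteq> evs Q \<and> (\<forall>y\<in>K. \<forall>x. (x, y) \<in> ordr Q \<longrightarrow> x \<in> K)"

definition delta :: "('e,'a) poset \<Rightarrow> ('e \<times> 'a) set \<Rightarrow> 'e \<Rightarrow> 'a \<Rightarrow> ('e,'a) poset" where
  "delta Q K e a =
     (let E' = insert (e, a) (evs Q)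
      in (E', Id_on E' \<union> (ordr Q \<union> K \<times> {(e, a)})\<^sup>+))"

definition preset :: "('n \<times> 'n) set \<Rightarrow> 'n \<Rightarrow> 'n set" where
  "preset F t = {s. (s, t) \<in> F}"

definition postset :: "('n \<times> 'n) set \<Rightarrow> 'n \<Rightarrow> 'n set" where
  "postset F t = {s. (t, s) \<in> F}"

definition is_net :: "'n set \<Rightarrow> 'n set \<Rightarrow> ('n \<times> 'n) set \<Rightarrow> bool" where
  "is_net S T F \<longleftrightarrow> S \<inter> T = {} \<and> F \<subseteq> (S \<times> T) \<union> (T \<times> S)
     \<and> (\<forall>t\<in>T. preset F t \<noteq> {} \<and> postset F t \<noteq> {})"

type_synonym ('e,'a,'n) cmarking = "(('e \<times> 'a) set \<times> 'n) set"

definition causal_marking :: "'n set \<Rightarrow> ('e,'a,'n) cmarking \<Rightarrow> bool" where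
  "causal_marking S c \<longleftrightarrow> finite c \<and> (\<forall>(K, s)\<in>c. finite K \<and> s \<in> S)"

definition causes :: "('e,'a,'n) cmarking \<Rightarrow> ('e \<times> 'a) set" where
  "causes c = (\<Union>(K, s)\<in>c. K)"

definition places :: "('e,'a,'n) cmarking \<Rightarrow> 'n set" where
  "places c = snd ` c"

definition rename :: "('e,'a,'n) cmarking \<Rightarrow> ('e \<Rightarrow> 'e) \<Rightarrow> ('e,'a,'n) cmarking" where
  "rename c \<sigma> = (\<lambda>(K, s). (lift \<sigma> ` K, s)) ` c"

definition pmarking :: "'n set \<Rightarrow> ('e,'a) poset \<Rightarrow> ('e,'a,'n) cmarking \<Rightarrow> bool" where
  "pmarking S Q c \<longleftrightarrow> wf_poset Q \<and> causal_marking S c \<and> (\<forall>(K, s)\<in>c. down_closed Q K)"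

definition stepC ::
  "'n set \<Rightarrow> 'n set \<Rightarrow> ('n \<times> 'n) set \<Rightarrow> ('n \<Rightarrow> 'a) \<Rightarrow>
   ('e,'a) poset \<Rightarrow> ('e,'a,'n) cmarking \<Rightarrow> ('e \<times> 'a) set \<times> 'e \<times> 'a \<Rightarrow>
   ('e,'a) poset \<Rightarrow> ('e,'a,'n) cmarking \<Rightarrow> bool" where
  "stepC S T F l Q c0 lab Q' c0' \<longleftrightarrow>
     (\<exists>t c c' e a K. t \<in> T \<and> pmarking S Q c0 \<and> c0 = c \<union> c' \<and> places c = preset F t
        \<and> a = l t \<and> e \<notin> names Q \<and> K = maxO Q (causes c) \<and> lab = (K, e, a)
        \<and> Q' = delta Q K e a
        \<and> c0' = {(causes c \<union> {(e, a)}, s) | s. s \<in> postset F t} \<union> c'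
        \<and> pmarking S Q' c0')"

definition bisimC ::
  "'n set \<Rightarrow> 'n set \<Rightarrow> ('n \<times> 'n) set \<Rightarrow> ('n \<Rightarrow> 'a) \<Rightarrow>
   (('e,'a) poset \<Rightarrow> (('e,'a,'n) cmarking \<times> ('e,'a,'n) cmarking) set) \<Rightarrow> bool" where
  "bisimC S T F l R \<longleftrightarrow>
     (\<forall>Q c1 c2. (c1, c2) \<in> R Q \<longrightarrow>
        pmarking S Q c1 \<and> pmarking S Q c2
        \<and> (\<forall>lab Q' c1'. stepC S T F l Q c1 lab Q' c1' \<longrightarrow>
             (\<exists>c2'. stepC S T F l Q c2 lab Q' c2' \<and> (c1', c2') \<in> R Q'))
        \<and> (\<forall>lab Q' c2'. stepC S T F l Q c2 lab Q' c2' \<longrightarrow>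
             (\<exists>c1'. stepC S T F l Q c1 lab Q' c1' \<and> (c1', c2') \<in> R Q')))"

definition simC ::
  "'n set \<Rightarrow> 'n set \<Rightarrow> ('n \<times> 'n) set \<Rightarrow> ('n \<Rightarrow> 'a) \<Rightarrow>
   ('e,'a) poset \<Rightarrow> ('e,'a,'n) cmarking \<Rightarrow> ('e,'a,'n) cmarking \<Rightarrow> bool" where
  "simC S T F l Q c1 c2 \<longleftrightarrow> (\<exists>R. bisimC S T F l R \<and> (c1, c2) \<in> R Q)"

definition delta_abs ::
  "(('e,'a) poset \<Rightarrow> ('e,'a) poset) \<Rightarrow> ('e,'a) poset \<Rightarrow> ('e \<times> 'a) set \<Rightarrow> 'a \<Rightarrow> ('e,'a) poset" where
  "delta_abs canon Q K a = canon (delta Q K (SOME e. e \<notin> names Q) a)"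

text \<open>canon Q = [Q], alpha Q = alpha_O : Q -> [Q], newf Q K a = new(Q,K,a) (the event name;
  its label is a), oldf Q K a = old(Q,K,a).\<close>
definition abstract_setting ::
  "(('e,'a) poset \<Rightarrow> ('e,'a) poset) \<Rightarrow> (('e,'a) poset \<Rightarrow> 'e \<Rightarrow> 'e) \<Rightarrow>
   (('e,'a) poset \<Rightarrow> ('e \<times> 'a) set \<Rightarrow> 'a \<Rightarrow> 'e) \<Rightarrow>
   (('e,'a) poset \<Rightarrow> ('e \<times> 'a) set \<Rightarrow> 'a \<Rightarrow> 'e \<Rightarrow> 'e) \<Rightarrow> bool" where
  "abstract_setting canon alpha newf oldf \<longleftrightarrow>
     (\<forall>Q. wf_poset Q \<longrightarrow> wf_poset (canon Q) \<and> iso (alpha Q) Q (canon Q))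
   \<and> (\<forall>Q Q'. wf_poset Q \<and> wf_poset Q' \<longrightarrow> (canon Q = canon Q' \<longleftrightarrow> (\<exists>\<sigma>. iso \<sigma> Q Q')))
   \<and> (\<forall>Q K a e. wf_poset Q \<and> canon Q = Q \<and> K \<subseteq> evs Q \<and> e \<notin> names Q \<longrightarrow>
        iso ((oldf Q K a)(e := newf Q K a)) (delta Q K e a) (delta_abs canon Q K a))"

definition stepAC ::
  "'n set \<Rightarrow> 'n set \<Rightarrow> ('n \<times> 'n) set \<Rightarrow> ('n \<Rightarrow> 'a) \<Rightarrow>
   (('e,'a) poset \<Rightarrow> ('e,'a) poset) \<Rightarrow> (('e,'a) poset \<Rightarrow> 'e \<Rightarrow> 'e) \<Rightarrow>
   (('e,'a) poset \<Rightarrow> ('e \<times> 'a) set \<Rightarrow> 'a \<Rightarrow> 'e) \<Rightarrow>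
   (('e,'a) poset \<Rightarrow> ('e \<times> 'a) set \<Rightarrow> 'a \<Rightarrow> 'e \<Rightarrow> 'e) \<Rightarrow>
   ('e,'a) poset \<Rightarrow> ('e,'a,'n) cmarking \<Rightarrow> ('e \<times> 'a) set \<times> 'a \<Rightarrow>
   ('e,'a) poset \<Rightarrow> ('e,'a,'n) cmarking \<Rightarrow> bool" where
  "stepAC S T F l canon alpha newf oldf P c lab P' c' \<longleftrightarrow>
     (\<exists>Q c0 K e a O1 c1. stepC S T F l Q c0 (K, e, a) O1 c1
        \<and> P = canon Q \<and> c = rename c0 (alpha Q)
        \<and> lab = (lift (alpha Q) ` K, a)
        \<and> P' = delta_abs canon (canon Q) (lift (alpha Q) ` K) a
        \<and> c' = rename c1 ((oldf (canon Q) (lift (alpha Q) ` K) a \<circ> alpha Q)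
                          (e := newf (canon Q) (lift (alpha Q) ` K) a)))"

definition bisimAC ::
  "'n set \<Rightarrow> 'n set \<Rightarrow> ('n \<times> 'n) set \<Rightarrow> ('n \<Rightarrow> 'a) \<Rightarrow>
   (('e,'a) poset \<Rightarrow> ('e,'a) poset) \<Rightarrow> (('e,'a) poset \<Rightarrow> 'e \<Rightarrow> 'e) \<Rightarrow>
   (('e,'a) poset \<Rightarrow> ('e \<times> 'a) set \<Rightarrow> 'a \<Rightarrow> 'e) \<Rightarrow>
   (('e,'a) poset \<Rightarrow> ('e \<times> 'a) set \<Rightarrow> 'a \<Rightarrow> 'e \<Rightarrow> 'e) \<Rightarrow>
   (('e,'a) poset \<Rightarrow> (('e,'a,'n) cmarking \<times> ('e,'a,'n) cmarking) set) \<Rightarrow> bool" where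
  "bisimAC S T F l canon alpha newf oldf R \<longleftrightarrow>
     (\<forall>Q c1 c2. (c1, c2) \<in> R Q \<longrightarrow>
        canon Q = Q \<and> pmarking S Q c1 \<and> pmarking S Q c2
        \<and> (\<forall>lab Q' c1'. stepAC S T F l canon alpha newf oldf Q c1 lab Q' c1' \<longrightarrow>
             (\<exists>c2'. stepAC S T F l canon alpha newf oldf Q c2 lab Q' c2' \<and> (c1', c2') \<in> R Q'))
        \<and> (\<forall>lab Q' c2'. stepAC S T F l canon alpha newf oldf Q c2 lab Q' c2' \<longrightarrow>
             (\<exists>c1'. stepAC S T F l canon alpha newf oldf Q c1 lab Q' c1' \<and> (c1', c2') \<in> R Q')))"

definition simAC ::
  "'n set \<Rightarrow> 'n set \<Rightarrow> ('n \<times> 'n) set \<Rightarrow> ('n \<Rightarrow> 'a) \<Rightarrow>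
   (('e,'a) poset \<Rightarrow> ('e,'a) poset) \<Rightarrow> (('e,'a) poset \<Rightarrow> 'e \<Rightarrow> 'e) \<Rightarrow>
   (('e,'a) poset \<Rightarrow> ('e \<times> 'a) set \<Rightarrow> 'a \<Rightarrow> 'e) \<Rightarrow>
   (('e,'a) poset \<Rightarrow> ('e \<times> 'a) set \<Rightarrow> 'a \<Rightarrow> 'e \<Rightarrow> 'e) \<Rightarrow>
   ('e,'a) poset \<Rightarrow> ('e,'a,'n) cmarking \<Rightarrow> ('e,'a,'n) cmarking \<Rightarrow> bool" where
  "simAC S T F l canon alpha newf oldf Q c1 c2 \<longleftrightarrow>
     (\<exists>R. bisimAC S T F l canon alpha newf oldf R \<and> (c1, c2) \<in> R Q)"

end

theory Submission imports Defs begin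

definition pimg :: "('e \<Rightarrow> 'e) \<Rightarrow> ('e,'a) poset \<Rightarrow> ('e,'a) poset" where
  "pimg \<sigma> Q = (lift \<sigma> ` evs Q, map_prod (lift \<sigma>) (lift \<sigma>) ` ordr Q)"

lemma evs_pimg[simp]: "evs (pimg \<sigma> Q) = lift \<sigma> ` evs Q" by (simp add: pimg_def evs_def)
lemma ordr_pimg[simp]: "ordr (pimg \<sigma> Q) = map_prod (lift \<sigma>) (lift \<sigma>) ` ordr Q" by (simp add: pimg_def ordr_def)
lemma fst_lift[simp]: "fst (lift \<sigma> p) = \<sigma> (fst p)" by (simp add: lift_def)
lemma snd_lift[simp]: "snd (lift \<sigma> p) = snd p" by (simp add: lift_def)
lemma lift_pair[simp]: "lift \<sigma> (x, b) = (\<sigma> x, b)" by (simp add: lift_def)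
lemma lift_comp: "lift \<tau> (lift \<sigma> p) = lift (\<tau> \<circ> \<sigma>) p" by (simp add: lift_def)

lemma names_pimg[simp]: "names (pimg \<sigma> Q) = \<sigma> ` names Q"
  by (auto simp: names_def image_image)

lemma poset_eqI: "evs Q = evs Q' \<Longrightarrow> ordr Q = ordr Q' \<Longrightarrow> Q = Q'"
  by (metis evs_def ordr_def prod.expand)

lemma pimg_comp: "pimg \<tau> (pimg \<sigma> Q) = pimg (\<tau> \<circ> \<sigma>) Q"
  by (rule poset_eqI) (auto simp: image_image lift_comp map_prod_def split_def)

lemma wf_ordr: "wf_poset Q \<Longrightarrow> ordr Q \<subseteq> evs Q \<times> evs Q" by (simp add: wf_poset_def)

lemma in_names: "p \<in> evs Q \<Longrightarrow> fst p \<in> names Q" by (simp add: names_def)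

lemma lift_cong: "p \<in> evs Q \<Longrightarrow> \<forall>x\<in>names Q. \<sigma> x = \<sigma>' x \<Longrightarrow> lift \<sigma> p = lift \<sigma>' p"
  by (simp add: lift_def in_names)

lemma pimg_cong:
  assumes "wf_poset Q" "\<forall>x\<in>names Q. \<sigma> x = \<sigma>' x"
  shows "pimg \<sigma> Q = pimg \<sigma>' Q"
proof (rule poset_eqI)
  show "evs (pimg \<sigma> Q) = evs (pimg \<sigma>' Q)" using assms lift_cong[of _ Q \<sigma> \<sigma>'] by (auto simp: image_iff)
  have "\<And>p q. (p,q) \<in> ordr Q \<Longrightarrow> lift \<sigma> p = lift \<sigma>' p \<and> lift \<sigma> q = lift \<sigma>' q"
    using assms wf_ordr lift_cong by blast
  then show "ordr (pimg \<sigma> Q) = ordr (pimg \<sigma>' Q)" by (force simp: image_iff)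
qed

lemma pimg_id_on: "wf_poset Q \<Longrightarrow> \<forall>x\<in>names Q. \<sigma> x = x \<Longrightarrow> pimg \<sigma> Q = Q"
proof -
  assume a: "wf_poset Q" "\<forall>x\<in>names Q. \<sigma> x = x"
  have "pimg \<sigma> Q = pimg id Q" using pimg_cong[OF a(1)] a(2) by simp
  also have "\<dots> = Q" by (rule poset_eqI) (auto simp: lift_def map_prod_def)
  finally show ?thesis .
qed

lemma rename_comp: "rename (rename c \<sigma>) \<tau> = rename c (\<tau> \<circ> \<sigma>)"
  by (auto simp: rename_def image_image lift_comp split_def)

lemma pm_causes: "pmarking S Q c \<Longrightarrow> (K, s) \<in> c \<Longrightarrow> K \<subseteq> evs Q"
  by (auto simp: pmarking_def down_closed_def)

lemma rename_cong:
  assumes "pmarking S Q c" "\<forall>x\<in>names Q. \<sigma> x = \<sigma>' x"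
  shows "rename c \<sigma> = rename c \<sigma>'"
proof -
  have "\<And>K s. (K,s) \<in> c \<Longrightarrow> lift \<sigma> ` K = lift \<sigma>' ` K"
  proof -
    fix K s assume "(K,s) \<in> c"
    then have "K \<subseteq> evs Q" using pm_causes[OF assms(1)] by blast
    then have "\<forall>p\<in>K. lift \<sigma> p = lift \<sigma>' p" using lift_cong[of _ Q \<sigma> \<sigma>'] assms(2) by blast
    then show "lift \<sigma> ` K = lift \<sigma>' ` K" by (simp add: image_def)
  qed
  then show ?thesis unfolding rename_def by (intro image_cong refl) (clarsimp split: prod.splits)
qed

lemma rename_id_on: "pmarking S Q c \<Longrightarrow> \<forall>x\<in>names Q. \<sigma> x = x \<Longrightarrow> rename c \<sigma> = c"
proof -
  assume a: "pmarking S Q c" "\<forall>x\<in>names Q. \<sigma> x = x"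
  have "rename c \<sigma> = rename c id" using rename_cong[OF a(1)] a(2) by simp
  also have "\<dots> = c" by (simp add: rename_def lift_def split_def)
  finally show ?thesis .
qed

lemma inj_lift: "inj_on \<sigma> (names Q) \<Longrightarrow> inj_on fst (evs Q) \<Longrightarrow> inj_on (lift \<sigma>) (evs Q)"
  unfolding inj_on_def by (metis fst_lift in_names snd_lift prod.expand)


lemma trancl_img_sub: "map_prod f f ` (r\<^sup>+) \<subseteq> (map_prod f f ` r)\<^sup>+"
proof clarify
  fix a b assume "(a,b) \<in> r\<^sup>+"
  then show "(f a, f b) \<in> (map_prod f f ` r)\<^sup>+"
  proof (induction rule: trancl_induct)
    case (base y) then show ?case by (intro r_into_trancl) (force simp: image_iff)
  next
    case (step y z)
    have "(f y, f z) \<in> map_prod f f ` r" using step(2) by (force simp: image_iff)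
    then show ?case using step(3) by (meson trancl.trancl_into_trancl)
  qed
qed

lemma trancl_img:
  assumes inj: "inj_on f A" and r: "r \<subseteq> A \<times> A"
  shows "(map_prod f f ` r)\<^sup>+ = map_prod f f ` (r\<^sup>+)"
proof
  show "map_prod f f ` (r\<^sup>+) \<subseteq> (map_prod f f ` r)\<^sup>+" by (rule trancl_img_sub)
  have rA: "r\<^sup>+ \<subseteq> A \<times> A" using r trancl_subset_Sigma by blast
  show "(map_prod f f ` r)\<^sup>+ \<subseteq> map_prod f f ` (r\<^sup>+)"
  proof clarify
    fix x y assume "(x,y) \<in> (map_prod f f ` r)\<^sup>+"
    then show "(x,y) \<in> map_prod f f ` (r\<^sup>+)"
    proof (induction rule: trancl_induct)
      case (base y) then show ?case by auto
    next
      case (step y z)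
      from step(3) obtain a b where ab: "(a,b) \<in> r\<^sup>+" "x = f a" "y = f b" by auto
      from step(2) obtain b' c where bc: "(b',c) \<in> r" "y = f b'" "z = f c" by auto
      have "b \<in> A" "b' \<in> A" using ab(1) bc(1) rA r by auto
      then have "b = b'" using inj ab(3) bc(2) by (simp add: inj_on_def)
      then have "(a,c) \<in> r\<^sup>+" using ab(1) bc(1) by auto
      then show ?case using ab bc by force
    qed
  qed
qed

lemma wf_pimg:
  assumes wf: "wf_poset Q" and inj: "inj_on \<sigma> (names Q)"
  shows "wf_poset (pimg \<sigma> Q)"
proof -
  let ?f = "lift \<sigma>"
  have injf: "inj_on ?f (evs Q)" using inj wf inj_lift wf_poset_def by blast
  have po: "partial_order_on (evs Q) (ordr Q)" and sub: "ordr Q \<subseteq> evs Q \<times> evs Q"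
    using wf by (auto simp: wf_poset_def)
  have "inj_on fst (?f ` evs Q)"
  proof (rule inj_on_imageI)
    have "inj_on fst (evs Q)" using wf by (simp add: wf_poset_def)
    moreover have "inj_on \<sigma> (fst ` evs Q)" using inj by (simp add: names_def)
    ultimately have "inj_on (\<sigma> \<circ> fst) (evs Q)" by (rule comp_inj_on)
    moreover have "\<sigma> \<circ> fst = fst \<circ> lift \<sigma>" by (auto simp: lift_def)
    ultimately show "inj_on (fst \<circ> lift \<sigma>) (evs Q)" by metis
  qed
  moreover have "refl_on (?f ` evs Q) (map_prod ?f ?f ` ordr Q)"
    using po unfolding partial_order_on_def preorder_on_def refl_on_def by force
  moreover have "trans (map_prod ?f ?f ` ordr Q)"
  proof (rule transI)
    fix x y z assume xy: "(x,y) \<in> map_prod ?f ?f ` ordr Q" and yz: "(y,z) \<in> map_prod ?f ?f ` ordr Q"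
    from xy obtain a b where ab: "(a,b) \<in> ordr Q" "x = ?f a" "y = ?f b" by auto
    from yz obtain c d where cd: "(c,d) \<in> ordr Q" "y = ?f c" "z = ?f d" by auto
    have "b = c" using ab cd sub injf by (auto simp: inj_on_def)
    then have "(a,d) \<in> ordr Q"
      using ab cd po unfolding partial_order_on_def preorder_on_def by (meson transD)
    then show "(x,z) \<in> map_prod ?f ?f ` ordr Q" using ab cd by force
  qed
  moreover have "antisym (map_prod ?f ?f ` ordr Q)"
  proof (rule antisymI)
    fix x y assume xy: "(x,y) \<in> map_prod ?f ?f ` ordr Q" and yx: "(y,x) \<in> map_prod ?f ?f ` ordr Q"
    from xy obtain a b where ab: "(a,b) \<in> ordr Q" "x = ?f a" "y = ?f b" by auto
    from yx obtain c d where cd: "(c,d) \<in> ordr Q" "y = ?f c" "x = ?f d" by auto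
    have "b = c" "a = d" using ab cd sub injf by (auto simp: inj_on_def)
    then have "a = b" using ab cd po unfolding partial_order_on_def by (metis antisymD)
    then show "x = y" using ab by simp
  qed
  ultimately show ?thesis using wf sub
    by (auto simp: wf_poset_def partial_order_on_def preorder_on_def)
qed

lemma pmarking_pimg:
  assumes pm: "pmarking S Q c" and inj: "inj_on \<sigma> (names Q)"
  shows "pmarking S (pimg \<sigma> Q) (rename c \<sigma>)"
proof -
  have wf: "wf_poset Q" using pm by (simp add: pmarking_def)
  have injf: "inj_on (lift \<sigma>) (evs Q)" using inj wf inj_lift wf_poset_def by blast
  have sub: "ordr Q \<subseteq> evs Q \<times> evs Q" using wf by (simp add: wf_poset_def)
  have "causal_marking S (rename c \<sigma>)" using pm
    by (auto simp: pmarking_def causal_marking_def rename_def)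
  moreover have "down_closed (pimg \<sigma> Q) (lift \<sigma> ` K)" if "(K,s) \<in> c" for K s
  proof -
    have dc: "down_closed Q K" using pm that by (auto simp: pmarking_def)
    show ?thesis unfolding down_closed_def
    proof (intro conjI ballI allI impI)
      show "lift \<sigma> ` K \<subseteq> evs (pimg \<sigma> Q)" using dc by (auto simp: down_closed_def)
    next
      fix y x assume y: "y \<in> lift \<sigma> ` K" and xy: "(x,y) \<in> ordr (pimg \<sigma> Q)"
      then obtain y0 where y0: "y0 \<in> K" "y = lift \<sigma> y0" by auto
      from xy obtain a b where ab: "(a,b) \<in> ordr Q" "x = lift \<sigma> a" "y = lift \<sigma> b" by auto
      have "b = y0" using ab y0 sub dc injf by (auto simp: inj_on_def down_closed_def)
      then have "a \<in> K" using dc ab y0 unfolding down_closed_def by blast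
      then show "x \<in> lift \<sigma> ` K" using ab by auto
    qed
  qed
  ultimately show ?thesis using pm wf_pimg[OF wf inj]
    by (auto simp: pmarking_def rename_def)
qed


lemma iso_pimg:
  assumes wf: "wf_poset Q" "wf_poset Q2" and iso: "iso \<sigma> Q Q2"
  shows "Q2 = pimg \<sigma> Q" "inj_on \<sigma> (names Q)"
proof -
  let ?t = "inv_into (names Q) \<sigma>"
  have bij: "bij_betw \<sigma> (names Q) (names Q2)" and m1: "morphism \<sigma> Q Q2" and m2: "morphism ?t Q2 Q"
    using iso by (auto simp: iso_def)
  show inj: "inj_on \<sigma> (names Q)" using bij by (simp add: bij_betw_def)
  have bk: "lift \<sigma> (lift ?t p) = p" if pin: "p \<in> evs Q2" for p
  proof -
    have "fst p \<in> \<sigma> ` names Q" using pin bij by (simp add: bij_betw_def in_names)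
    then show ?thesis by (simp add: lift_def f_inv_into_f)
  qed
  have sub2: "ordr Q2 \<subseteq> evs Q2 \<times> evs Q2" using wf(2) by (simp add: wf_poset_def)
  show "Q2 = pimg \<sigma> Q"
  proof (rule poset_eqI)
    show "evs Q2 = evs (pimg \<sigma> Q)"
    proof
      show "evs Q2 \<subseteq> evs (pimg \<sigma> Q)"
      proof
        fix p assume p: "p \<in> evs Q2"
        then have "lift ?t p \<in> evs Q" using m2 by (simp add: morphism_def)
        then show "p \<in> evs (pimg \<sigma> Q)" using bk[OF p] by (metis evs_pimg imageI)
      qed
      show "evs (pimg \<sigma> Q) \<subseteq> evs Q2" using m1 by (auto simp: morphism_def)
    qed
    show "ordr Q2 = ordr (pimg \<sigma> Q)"
    proof
      show "ordr Q2 \<subseteq> ordr (pimg \<sigma> Q)"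
      proof clarify
        fix p q assume pq: "(p,q) \<in> ordr Q2"
        then have "(lift ?t p, lift ?t q) \<in> ordr Q" using m2 by (auto simp: morphism_def)
        moreover have "p \<in> evs Q2" "q \<in> evs Q2" using pq sub2 by auto
        ultimately show "(p,q) \<in> ordr (pimg \<sigma> Q)" using bk by (metis map_prod_simp ordr_pimg imageI)
      qed
      show "ordr (pimg \<sigma> Q) \<subseteq> ordr Q2" using m1 by (auto simp: morphism_def)
    qed
  qed
qed

lemma evs_delta: "evs (delta Q K e a) = insert (e,a) (evs Q)"
  by (simp add: delta_def evs_def Let_def)
lemma ordr_delta: "ordr (delta Q K e a) = Id_on (insert (e,a) (evs Q)) \<union> (ordr Q \<union> K \<times> {(e, a)})\<^sup>+"
  by (simp add: delta_def ordr_def Let_def)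
lemma names_delta[simp]: "names (delta Q K e a) = insert e (names Q)"
  by (simp add: names_def evs_delta)

lemma delta_pimg:
  assumes wf: "wf_poset Q" and K: "K \<subseteq> evs Q" and e: "e \<notin> names Q"
    and inj: "inj_on \<sigma> (insert e (names Q))"
  shows "pimg \<sigma> (delta Q K e a) = delta (pimg \<sigma> Q) (lift \<sigma> ` K) (\<sigma> e) a"
proof -
  let ?f = "lift \<sigma>" and ?A = "insert (e,a) (evs Q)"
  have injf: "inj_on ?f ?A"
  proof -
    have "inj_on fst ?A" using wf e unfolding wf_poset_def by (force simp: names_def inj_on_def)
    moreover have "inj_on \<sigma> (fst ` ?A)" using inj by (simp add: names_def)
    ultimately have "inj_on (\<sigma> \<circ> fst) ?A" by (rule comp_inj_on)
    then show ?thesis unfolding inj_on_def by (metis comp_apply fst_lift snd_lift prod.expand)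
  qed
  have r: "ordr Q \<union> K \<times> {(e, a)} \<subseteq> ?A \<times> ?A" using wf K by (auto simp: wf_poset_def)
  have tr: "map_prod ?f ?f ` ((ordr Q \<union> K \<times> {(e, a)})\<^sup>+) = (map_prod ?f ?f ` (ordr Q \<union> K \<times> {(e, a)}))\<^sup>+"
    using trancl_img[OF injf r] by simp
  have im2: "map_prod ?f ?f ` (K \<times> {(e, a)}) = ?f ` K \<times> {(\<sigma> e, a)}" by force
  have im: "map_prod ?f ?f ` (ordr Q \<union> K \<times> {(e, a)}) = map_prod ?f ?f ` ordr Q \<union> ?f ` K \<times> {(\<sigma> e, a)}"
    by (simp add: image_Un im2)
  have idg: "map_prod g g ` Id_on B = Id_on (g ` B)" for g :: "'a \<times> 'b \<Rightarrow> 'a \<times> 'b" and B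
    by (auto simp: Id_on_def image_iff)
  have idon: "map_prod ?f ?f ` Id_on ?A = Id_on (insert (\<sigma> e, a) (?f ` evs Q))"
    by (simp add: idg)
  show ?thesis
    by (rule poset_eqI) (simp_all add: evs_delta ordr_delta image_Un tr im im2 idon)
qed

lemma maxO_pimg:
  assumes wf: "wf_poset Q" and inj: "inj_on \<sigma> (names Q)" and K: "K \<subseteq> evs Q"
  shows "maxO (pimg \<sigma> Q) (lift \<sigma> ` K) = lift \<sigma> ` maxO Q K"
proof -
  have injf: "inj_on (lift \<sigma>) (evs Q)" using inj wf inj_lift wf_poset_def by blast
  have sub: "ordr Q \<subseteq> evs Q \<times> evs Q" using wf by (simp add: wf_poset_def)
  have eq: "((lift \<sigma> k, lift \<sigma> k') \<in> map_prod (lift \<sigma>) (lift \<sigma>) ` ordr Q) = ((k,k') \<in> ordr Q)"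
    if "k \<in> K" "k' \<in> K" for k k'
  proof
    assume "(lift \<sigma> k, lift \<sigma> k') \<in> map_prod (lift \<sigma>) (lift \<sigma>) ` ordr Q"
    then obtain x y where "(x,y) \<in> ordr Q" "lift \<sigma> k = lift \<sigma> x" "lift \<sigma> k' = lift \<sigma> y" by auto
    moreover then have "x = k" "y = k'" using sub K that injf by (auto simp: inj_on_def)
    ultimately show "(k,k') \<in> ordr Q" by simp
  qed auto
  have eq2: "(lift \<sigma> k = lift \<sigma> k') = (k = k')" if "k \<in> K" "k' \<in> K" for k k'
    using that K injf by (auto simp: inj_on_def)
  show ?thesis
  proof (rule set_eqI, rule iffI)
    fix x assume x: "x \<in> maxO (pimg \<sigma> Q) (lift \<sigma> ` K)"
    then obtain k where k: "k \<in> K" "x = lift \<sigma> k" by (auto simp: maxO_def)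
    have "\<not> (\<exists>k'\<in>K. (k, k') \<in> ordr Q \<and> k \<noteq> k')"
    proof
      assume "\<exists>k'\<in>K. (k, k') \<in> ordr Q \<and> k \<noteq> k'"
      then obtain k' where "k' \<in> K" "(k, k') \<in> ordr Q" "k \<noteq> k'" by blast
      then have "(x, lift \<sigma> k') \<in> ordr (pimg \<sigma> Q)" "x \<noteq> lift \<sigma> k'" "lift \<sigma> k' \<in> lift \<sigma> ` K"
        using k eq eq2 by auto
      then show False using x unfolding maxO_def by blast
    qed
    then show "x \<in> lift \<sigma> ` maxO Q K" using k by (auto simp: maxO_def)
  next
    fix x assume "x \<in> lift \<sigma> ` maxO Q K"
    then obtain k where k: "k \<in> K" "x = lift \<sigma> k" "\<not> (\<exists>k'\<in>K. (k, k') \<in> ordr Q \<and> k \<noteq> k')"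
      by (auto simp: maxO_def)
    have "\<not> (\<exists>k''\<in>lift \<sigma> ` K. (x, k'') \<in> ordr (pimg \<sigma> Q) \<and> x \<noteq> k'')"
    proof
      assume "\<exists>k''\<in>lift \<sigma> ` K. (x, k'') \<in> ordr (pimg \<sigma> Q) \<and> x \<noteq> k''"
      then obtain k' where "k' \<in> K" "(x, lift \<sigma> k') \<in> ordr (pimg \<sigma> Q)" "x \<noteq> lift \<sigma> k'" by blast
      then have "(k,k') \<in> ordr Q" "k \<noteq> k'" using k eq eq2 by auto
      then show False using k \<open>k' \<in> K\<close> by blast
    qed
    then show "x \<in> maxO (pimg \<sigma> Q) (lift \<sigma> ` K)" using k by (auto simp: maxO_def)
  qed
qed

lemma causes_rename: "causes (rename c \<sigma>) = lift \<sigma> ` causes c"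
  by (auto simp: causes_def rename_def)
lemma places_rename[simp]: "places (rename c \<sigma>) = places c"
  by (force simp: places_def rename_def image_iff)


lemma causes_sub: "pmarking S Q c0 \<Longrightarrow> c \<subseteq> c0 \<Longrightarrow> causes c \<subseteq> evs Q"
  unfolding causes_def by (auto dest: pm_causes)

lemma maxO_sub: "maxO Q K \<subseteq> K" by (auto simp: maxO_def)

lemma stepC_D:
  assumes "stepC S T F l Q c0 (K,e,a) Q1 c0'"
  shows "pmarking S Q c0" "pmarking S Q1 c0'" "e \<notin> names Q" "K \<subseteq> evs Q" "Q1 = delta Q K e a"
proof -
  from assms obtain t c c' where "pmarking S Q c0" "c0 = c \<union> c'" "e \<notin> names Q"
    "K = maxO Q (causes c)" "Q1 = delta Q K e a" "pmarking S Q1 c0'"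
    unfolding stepC_def by blast
  then show "pmarking S Q c0" "pmarking S Q1 c0'" "e \<notin> names Q" "K \<subseteq> evs Q" "Q1 = delta Q K e a"
    using causes_sub[of S Q c0 c] maxO_sub[of Q "causes c"] by auto
qed

lemma stepC_iso:
  assumes step: "stepC S T F l Q c0 (K,e,a) Q1 c0'" and inj: "inj_on \<sigma> (insert e (names Q))"
  shows "stepC S T F l (pimg \<sigma> Q) (rename c0 \<sigma>) (lift \<sigma> ` K, \<sigma> e, a)
           (delta (pimg \<sigma> Q) (lift \<sigma> ` K) (\<sigma> e) a) (rename c0' \<sigma>)"
    and "pimg \<sigma> Q1 = delta (pimg \<sigma> Q) (lift \<sigma> ` K) (\<sigma> e) a"
proof -
  from step obtain t c c' where t: "t \<in> T" and pm: "pmarking S Q c0" and c0: "c0 = c \<union> c'"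
    and pl: "places c = preset F t" and al: "a = l t" and e: "e \<notin> names Q"
    and K: "K = maxO Q (causes c)" and Q1: "Q1 = delta Q K e a"
    and c0': "c0' = {(causes c \<union> {(e, a)}, s) | s. s \<in> postset F t} \<union> c'"
    and pm': "pmarking S Q1 c0'"
    unfolding stepC_def by blast
  have wf: "wf_poset Q" using pm by (simp add: pmarking_def)
  have injQ: "inj_on \<sigma> (names Q)" using inj by (rule inj_on_subset) auto
  have cs: "causes c \<subseteq> evs Q" using causes_sub[OF pm] c0 by blast
  have Ksub: "K \<subseteq> evs Q" using cs K maxO_sub by blast
  have dp: "pimg \<sigma> Q1 = delta (pimg \<sigma> Q) (lift \<sigma> ` K) (\<sigma> e) a"
    using delta_pimg[OF wf Ksub e inj] Q1 by simp
  then show "pimg \<sigma> Q1 = delta (pimg \<sigma> Q) (lift \<sigma> ` K) (\<sigma> e) a" .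
  have 1: "pmarking S (pimg \<sigma> Q) (rename c0 \<sigma>)" using pmarking_pimg[OF pm injQ] .
  have 2: "rename c0 \<sigma> = rename c \<sigma> \<union> rename c' \<sigma>" using c0 by (simp add: rename_def image_Un)
  have 3: "\<sigma> e \<notin> names (pimg \<sigma> Q)" using inj e by (auto simp: inj_on_def)
  have 4: "lift \<sigma> ` K = maxO (pimg \<sigma> Q) (causes (rename c \<sigma>))"
    using maxO_pimg[OF wf injQ cs] K by (simp add: causes_rename)
  have 5: "rename c0' \<sigma> = {(causes (rename c \<sigma>) \<union> {(\<sigma> e, a)}, s) | s. s \<in> postset F t} \<union> rename c' \<sigma>"
    unfolding c0' causes_rename by (auto simp: rename_def image_Un image_iff)
  have 6: "pmarking S (delta (pimg \<sigma> Q) (lift \<sigma> ` K) (\<sigma> e) a) (rename c0' \<sigma>)"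
  proof -
    have "inj_on \<sigma> (names Q1)" using inj Q1 by simp
    from pmarking_pimg[OF pm' this] show ?thesis using dp by simp
  qed
  show "stepC S T F l (pimg \<sigma> Q) (rename c0 \<sigma>) (lift \<sigma> ` K, \<sigma> e, a)
           (delta (pimg \<sigma> Q) (lift \<sigma> ` K) (\<sigma> e) a) (rename c0' \<sigma>)"
    unfolding stepC_def
    by (rule exI[of _ t], rule exI[of _ "rename c \<sigma>"], rule exI[of _ "rename c' \<sigma>"],
        rule exI[of _ "\<sigma> e"], rule exI[of _ a], rule exI[of _ "lift \<sigma> ` K"])
       (use t 1 2 pl al 3 4 5 6 in auto)
qed


lemma inj_upd: "inj_on f N \<Longrightarrow> x \<notin> N \<Longrightarrow> y \<notin> f ` N \<Longrightarrow> inj_on (f(x:=y)) (insert x N)"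
  by (auto simp: inj_on_def)

lemma finite_names: "wf_poset Q \<Longrightarrow> finite (names Q)"
  by (simp add: wf_poset_def names_def)

lemma fresh: "infinite (UNIV :: 'e set) \<Longrightarrow> wf_poset (Q :: ('e,'a) poset) \<Longrightarrow> \<exists>e. e \<notin> names Q"
  using ex_new_if_finite finite_names by blast

lemma simC_pm: "simC S T F l Q c1 c2 \<Longrightarrow> pmarking S Q c1 \<and> pmarking S Q c2"
  unfolding simC_def bisimC_def by blast

lemma simC_match: "simC S T F l Q c1 c2 \<Longrightarrow> stepC S T F l Q c1 lab Q' c1' \<Longrightarrow>
   \<exists>c2'. stepC S T F l Q c2 lab Q' c2' \<and> simC S T F l Q' c1' c2'"
  unfolding simC_def bisimC_def by blast

lemma simC_sym: "simC S T F l Q c1 c2 \<Longrightarrow> simC S T F l Q c2 c1"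
proof -
  assume "simC S T F l Q c1 c2"
  then obtain R where R: "bisimC S T F l R" "(c1,c2) \<in> R Q" unfolding simC_def by blast
  have "bisimC S T F l (\<lambda>Q. (R Q)\<inverse>)" using R(1) unfolding bisimC_def by fastforce
  then show ?thesis using R(2) unfolding simC_def by blast
qed

lemma A_step:
  assumes inf: "infinite (UNIV :: 'e set)" and inj: "inj_on \<sigma> (names Q)"
    and sim: "simC S T F l (Q :: ('e,'a) poset) c1 c2"
    and st: "stepC S T F l (pimg \<sigma> Q) (rename c1 \<sigma>) lab Q'' d'"
  shows "\<exists>d2'. stepC S T F l (pimg \<sigma> Q) (rename c2 \<sigma>) lab Q'' d2' \<and>
     (\<exists>Q0 \<sigma>0 x1 x2. inj_on \<sigma>0 (names Q0) \<and> pimg \<sigma>0 Q0 = Q'' \<and> d' = rename x1 \<sigma>0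
        \<and> d2' = rename x2 \<sigma>0 \<and> simC S T F l Q0 x1 x2)"
proof -
  obtain K' e' a where lab: "lab = (K', e', a)" by (cases lab) auto
  let ?Q' = "pimg \<sigma> Q"
  have pm1: "pmarking S Q c1" and pm2: "pmarking S Q c2" using simC_pm[OF sim] by auto
  have wf: "wf_poset Q" using pm1 by (simp add: pmarking_def)
  note sD = stepC_D[OF st[unfolded lab]]
  have e': "e' \<notin> \<sigma> ` names Q" using sD(3) by simp
  obtain e where e: "e \<notin> names Q" using fresh[OF inf wf] by blast
  define \<tau> where "\<tau> = inv_into (names Q) \<sigma>"
  define \<tau>' where "\<tau>' = \<tau>(e' := e)"
  define \<sigma>' where "\<sigma>' = \<sigma>(e := e')"
  have tau_s: "\<tau>' (\<sigma> x) = x" if "x \<in> names Q" for x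
    using that inj e' unfolding \<tau>'_def \<tau>_def by auto
  have s_tau: "\<sigma>' (\<tau>' y) = y" if "y \<in> insert e' (\<sigma> ` names Q)" for y
  proof (cases "y = e'")
    case True then show ?thesis by (simp add: \<tau>'_def \<sigma>'_def)
  next
    case False
    then have y: "y \<in> \<sigma> ` names Q" using that by simp
    then have "\<tau> y \<in> names Q" unfolding \<tau>_def by (auto intro: inv_into_into)
    then have "\<tau> y \<noteq> e" using e by auto
    then show ?thesis using False y unfolding \<tau>'_def \<sigma>'_def \<tau>_def by (simp add: f_inv_into_f)
  qed
  have injt: "inj_on \<tau>' (insert e' (names ?Q'))"
  proof -
    have i1: "inj_on \<tau> (\<sigma> ` names Q)" unfolding \<tau>_def by (rule inj_on_inv_into) simp
    have i2: "e \<notin> \<tau> ` (\<sigma> ` names Q)" using e inj unfolding \<tau>_def by auto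
    show ?thesis unfolding \<tau>'_def using inj_upd[OF i1 e' i2] by simp
  qed
  have injs: "inj_on \<sigma>' (insert e (names Q))" unfolding \<sigma>'_def using inj_upd[OF inj e e'] .
  have QQ: "pimg \<tau>' ?Q' = Q" unfolding pimg_comp by (rule pimg_id_on[OF wf]) (simp add: tau_s)
  have cc1: "rename (rename c1 \<sigma>) \<tau>' = c1" unfolding rename_comp by (rule rename_id_on[OF pm1]) (simp add: tau_s)
  note it = stepC_iso[OF st[unfolded lab] injt]
  define K where "K = lift \<tau>' ` K'"
  have st1: "stepC S T F l Q c1 (K, e, a) (delta Q K e a) (rename d' \<tau>')"
    using it(1) unfolding QQ cc1 K_def by (simp add: \<tau>'_def)
  have Qd: "delta Q K e a = pimg \<tau>' Q''" using it(2) unfolding QQ K_def by (simp add: \<tau>'_def)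
  obtain c2' where c2': "stepC S T F l Q c2 (K, e, a) (delta Q K e a) c2'"
    "simC S T F l (delta Q K e a) (rename d' \<tau>') c2'"
    using simC_match[OF sim st1] by blast
  note it2 = stepC_iso[OF c2'(1) injs]
  have QQ2: "pimg \<sigma>' Q = ?Q'" by (rule pimg_cong[OF wf]) (use e in \<open>simp add: \<sigma>'_def\<close>)
  have cc2: "rename c2 \<sigma>' = rename c2 \<sigma>" by (rule rename_cong[OF pm2]) (use e in \<open>simp add: \<sigma>'_def\<close>)
  have KK: "lift \<sigma>' ` K = K'"
  proof -
    have "lift \<sigma>' ` K = lift (\<sigma>' \<circ> \<tau>') ` K'" unfolding K_def image_image lift_comp by simp
    moreover have "\<forall>p\<in>K'. lift (\<sigma>' \<circ> \<tau>') p = p"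
    proof
      fix p assume "p \<in> K'"
      then have "p \<in> evs ?Q'" using sD(4) by blast
      then have "fst p \<in> names ?Q'" by (rule in_names)
      then show "lift (\<sigma>' \<circ> \<tau>') p = p" using s_tau by (simp add: lift_def)
    qed
    then have "lift (\<sigma>' \<circ> \<tau>') ` K' = (\<lambda>p. p) ` K'" by (intro image_cong) auto
    ultimately show ?thesis by simp
  qed
  have pmd: "pmarking S Q'' d'" using sD(2) .
  have wf'': "wf_poset Q''" using pmd by (simp add: pmarking_def)
  have n'': "names Q'' = insert e' (\<sigma> ` names Q)" using sD(5) by simp
  have Qs: "pimg \<sigma>' (delta Q K e a) = Q''"
    unfolding Qd pimg_comp by (rule pimg_id_on[OF wf'']) (simp add: n'' s_tau)
  have dd: "rename (rename d' \<tau>') \<sigma>' = d'"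
    unfolding rename_comp by (rule rename_id_on[OF pmd]) (simp add: n'' s_tau)
  have st2: "stepC S T F l ?Q' (rename c2 \<sigma>) lab Q'' (rename c2' \<sigma>')"
    using it2(1) unfolding QQ2 cc2 KK lab sD(5) by (simp add: \<sigma>'_def)
  show ?thesis
    using st2 injs Qs dd c2'(2) by (intro exI[of _ "rename c2' \<sigma>'"] conjI exI[of _ "delta Q K e a"] exI[of _ \<sigma>']
        exI[of _ "rename d' \<tau>'"] exI[of _ c2']) auto
qed


lemma simC_pimg:
  assumes inf: "infinite (UNIV :: 'e set)" and inj: "inj_on \<sigma> (names Q)"
    and sim: "simC S T F l (Q :: ('e,'a) poset) c1 c2"
  shows "simC S T F l (pimg \<sigma> Q) (rename c1 \<sigma>) (rename c2 \<sigma>)"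
proof -
  define R where "R = (\<lambda>Q'. {(d1,d2). \<exists>Q \<sigma> c1 c2. inj_on \<sigma> (names Q) \<and> pimg \<sigma> Q = Q'
      \<and> d1 = rename c1 \<sigma> \<and> d2 = rename c2 \<sigma> \<and> simC S T F l (Q :: ('e,'a) poset) c1 c2})"
  have "bisimC S T F l R"
    unfolding bisimC_def
  proof (intro allI impI)
    fix Q' d1 d2 assume "(d1, d2) \<in> R Q'"
    then obtain Q \<sigma> c1 c2 where w: "inj_on \<sigma> (names Q)" "pimg \<sigma> Q = Q'" "d1 = rename c1 \<sigma>"
      "d2 = rename c2 \<sigma>" "simC S T F l Q c1 c2" unfolding R_def by blast
    have p: "pmarking S Q' d1" "pmarking S Q' d2" using w simC_pm[OF w(5)] pmarking_pimg by blast+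
    have fw: "\<forall>lab Q'' c1'. stepC S T F l Q' d1 lab Q'' c1' \<longrightarrow>
             (\<exists>c2'. stepC S T F l Q' d2 lab Q'' c2' \<and> (c1', c2') \<in> R Q'')"
      using A_step[OF inf w(1) w(5)] w unfolding R_def by blast
    have bw: "\<forall>lab Q'' c2'. stepC S T F l Q' d2 lab Q'' c2' \<longrightarrow>
             (\<exists>c1'. stepC S T F l Q' d1 lab Q'' c1' \<and> (c1', c2') \<in> R Q'')"
    proof (intro allI impI)
      fix lab Q'' c2' assume "stepC S T F l Q' d2 lab Q'' c2'"
      then obtain c1' where "stepC S T F l Q' d1 lab Q'' c1'" and
        "\<exists>Q0 \<sigma>0 x1 x2. inj_on \<sigma>0 (names Q0) \<and> pimg \<sigma>0 Q0 = Q'' \<and> c2' = rename x1 \<sigma>0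
        \<and> c1' = rename x2 \<sigma>0 \<and> simC S T F l Q0 x1 x2"
        using A_step[OF inf w(1) simC_sym[OF w(5)]] w by blast
      then show "\<exists>c1'. stepC S T F l Q' d1 lab Q'' c1' \<and> (c1', c2') \<in> R Q''"
        unfolding R_def using simC_sym by blast
    qed
    show "pmarking S Q' d1 \<and> pmarking S Q' d2 \<and> (\<forall>lab Q'' c1'. stepC S T F l Q' d1 lab Q'' c1' \<longrightarrow>
             (\<exists>c2'. stepC S T F l Q' d2 lab Q'' c2' \<and> (c1', c2') \<in> R Q'')) \<and>
          (\<forall>lab Q'' c2'. stepC S T F l Q' d2 lab Q'' c2' \<longrightarrow>
             (\<exists>c1'. stepC S T F l Q' d1 lab Q'' c1' \<and> (c1', c2') \<in> R Q''))"
      using p fw bw by blast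
  qed
  moreover have "(rename c1 \<sigma>, rename c2 \<sigma>) \<in> R (pimg \<sigma> Q)" unfolding R_def using inj sim by blast
  ultimately show ?thesis unfolding simC_def by blast
qed


lemma AS_canon:
  assumes AS: "abstract_setting canon alpha newf oldf" and wf: "wf_poset Q"
  shows "wf_poset (canon Q)" "canon Q = pimg (alpha Q) Q" "inj_on (alpha Q) (names Q)"
    "canon (canon Q) = canon Q"
proof -
  have i: "wf_poset (canon Q)" "iso (alpha Q) Q (canon Q)" using AS wf unfolding abstract_setting_def by blast+
  show "wf_poset (canon Q)" by (rule i(1))
  show "canon Q = pimg (alpha Q) Q" "inj_on (alpha Q) (names Q)" using iso_pimg[OF wf i(1) i(2)] by auto
  have "canon Q = canon (canon Q)" using AS wf i unfolding abstract_setting_def by blast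
  then show "canon (canon Q) = canon Q" by simp
qed

lemma image_lift_cong: "K \<subseteq> evs Q \<Longrightarrow> \<forall>x\<in>names Q. \<sigma> x = \<sigma>' x \<Longrightarrow> lift \<sigma> ` K = lift \<sigma>' ` K"
proof -
  assume a: "K \<subseteq> evs Q" "\<forall>x\<in>names Q. \<sigma> x = \<sigma>' x"
  then have "\<forall>p\<in>K. lift \<sigma> p = lift \<sigma>' p" using lift_cong by blast
  then show ?thesis by (intro image_cong) auto
qed

lemma BL:
  assumes AS: "abstract_setting canon alpha newf oldf" and inf: "infinite (UNIV :: 'e set)"
    and step: "stepC S T F l (Q0 :: ('e,'a) poset) c0 (K,e,a) O1 c1'"
  shows "inj_on ((oldf (canon Q0) (lift (alpha Q0) ` K) a \<circ> alpha Q0)(e := newf (canon Q0) (lift (alpha Q0) ` K) a)) (names O1)"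
    "pimg ((oldf (canon Q0) (lift (alpha Q0) ` K) a \<circ> alpha Q0)(e := newf (canon Q0) (lift (alpha Q0) ` K) a)) O1
       = delta_abs canon (canon Q0) (lift (alpha Q0) ` K) a"
    "canon (delta_abs canon (canon Q0) (lift (alpha Q0) ` K) a) = delta_abs canon (canon Q0) (lift (alpha Q0) ` K) a"
    "wf_poset (delta_abs canon (canon Q0) (lift (alpha Q0) ` K) a)"
proof -
  define P where "P = canon Q0"
  define K' where "K' = lift (alpha Q0) ` K"
  define \<beta> where "\<beta> = (oldf P K' a \<circ> alpha Q0)(e := newf P K' a)"
  define P' where "P' = delta_abs canon P K' a"
  note sD = stepC_D[OF step]
  have wf0: "wf_poset Q0" using sD(1) by (simp add: pmarking_def)
  have wf1: "wf_poset O1" using sD(2) by (simp add: pmarking_def)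
  note ac = AS_canon[OF AS wf0, folded P_def]
  define e0 where "e0 = (SOME e. e \<notin> names P)"
  have e0: "e0 \<notin> names P" unfolding e0_def using fresh[OF inf ac(1)] by (rule someI_ex)
  define \<gamma> where "\<gamma> = (alpha Q0)(e := e0)"
  have e0': "e0 \<notin> alpha Q0 ` names Q0" using e0 ac(2) by simp
  have injg: "inj_on \<gamma> (insert e (names Q0))" unfolding \<gamma>_def by (rule inj_upd[OF ac(3) sD(3) e0'])
  define D where "D = delta P K' e0 a"
  have gD: "pimg \<gamma> O1 = D"
  proof -
    have "pimg \<gamma> O1 = delta (pimg \<gamma> Q0) (lift \<gamma> ` K) (\<gamma> e) a"
      using delta_pimg[OF wf0 sD(4) sD(3) injg] sD(5) by simp
    moreover have "pimg \<gamma> Q0 = P" using ac(2) pimg_cong[OF wf0, of \<gamma> "alpha Q0"] sD(3)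
      unfolding \<gamma>_def by auto
    moreover have "lift \<gamma> ` K = K'" unfolding K'_def using image_lift_cong[OF sD(4), of \<gamma> "alpha Q0"] sD(3)
      unfolding \<gamma>_def by auto
    ultimately show ?thesis unfolding D_def \<gamma>_def by simp
  qed
  have injg1: "inj_on \<gamma> (names O1)" using injg sD(5) by simp
  have wfD: "wf_poset D" using wf_pimg[OF wf1 injg1] gD by simp
  have K'sub: "K' \<subseteq> evs P" unfolding K'_def ac(2) using sD(4) by auto
  have "iso ((oldf P K' a)(e0 := newf P K' a)) (delta P K' e0 a) (delta_abs canon P K' a)"
    using AS ac(1) ac(4) K'sub e0 unfolding abstract_setting_def by blast
  moreover have "delta_abs canon P K' a = canon D" unfolding delta_abs_def D_def e0_def ..
  ultimately have isoD: "iso ((oldf P K' a)(e0 := newf P K' a)) D (canon D)" unfolding D_def by simp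
  note acD = AS_canon[OF AS wfD]
  note ip = iso_pimg[OF wfD acD(1) isoD]
  have P'D: "P' = canon D" unfolding P'_def delta_abs_def D_def e0_def ..
  define \<theta> where "\<theta> = (oldf P K' a)(e0 := newf P K' a)"
  have comp: "\<forall>x\<in>names O1. (\<theta> \<circ> \<gamma>) x = \<beta> x"
  proof
    fix x assume "x \<in> names O1"
    then have "x = e \<or> x \<in> names Q0" using sD(5) by simp
    then show "(\<theta> \<circ> \<gamma>) x = \<beta> x"
    proof
      assume "x = e" then show ?thesis by (simp add: \<theta>_def \<gamma>_def \<beta>_def)
    next
      assume x: "x \<in> names Q0"
      then have "x \<noteq> e" using sD(3) by auto
      moreover have "alpha Q0 x \<noteq> e0" using x e0' by auto
      ultimately show ?thesis by (simp add: \<theta>_def \<gamma>_def \<beta>_def)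
    qed
  qed
  have "P' = pimg \<theta> D" using ip(1) P'D \<theta>_def by simp
  also have "\<dots> = pimg (\<theta> \<circ> \<gamma>) O1" using gD pimg_comp by metis
  also have "\<dots> = pimg \<beta> O1" by (rule pimg_cong[OF wf1 comp])
  finally show "pimg \<beta> O1 = P'" by simp
  have "inj_on (\<theta> \<circ> \<gamma>) (names O1)"
  proof (rule comp_inj_on[OF injg1])
    have "\<gamma> ` names O1 = names D" using gD by (metis names_pimg)
    then show "inj_on \<theta> (\<gamma> ` names O1)" using ip(2) \<theta>_def by simp
  qed
  then show "inj_on \<beta> (names O1)" using inj_on_cong comp by (metis)
  show "canon P' = P'" using P'D acD(4) by simp
  show "wf_poset P'" using P'D acD(1) by simp
qed


lemma simAC_D: "simAC S T F l canon alpha newf oldf P d1 d2 \<Longrightarrow>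
   canon P = P \<and> pmarking S P d1 \<and> pmarking S P d2"
  unfolding simAC_def bisimAC_def by blast

lemma simAC_match: "simAC S T F l canon alpha newf oldf P d1 d2 \<Longrightarrow>
   stepAC S T F l canon alpha newf oldf P d1 lab P' d1' \<Longrightarrow>
   \<exists>d2'. stepAC S T F l canon alpha newf oldf P d2 lab P' d2' \<and> simAC S T F l canon alpha newf oldf P' d1' d2'"
  unfolding simAC_def bisimAC_def by blast

lemma simAC_sym: "simAC S T F l canon alpha newf oldf P d1 d2 \<Longrightarrow> simAC S T F l canon alpha newf oldf P d2 d1"
proof -
  assume "simAC S T F l canon alpha newf oldf P d1 d2"
  then obtain R where R: "bisimAC S T F l canon alpha newf oldf R" "(d1,d2) \<in> R P" unfolding simAC_def by blast
  have "bisimAC S T F l canon alpha newf oldf (\<lambda>Q. (R Q)\<inverse>)" using R(1) unfolding bisimAC_def by fastforce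
  then show ?thesis using R(2) unfolding simAC_def by blast
qed

lemma H1:
  assumes AS: "abstract_setting canon alpha newf oldf" and inf: "infinite (UNIV :: 'e set)"
    and sim: "simC S T F l (P :: ('e,'a) poset) d1 d2"
    and st: "stepAC S T F l canon alpha newf oldf P d1 lab P' d1'"
  shows "\<exists>d2'. stepAC S T F l canon alpha newf oldf P d2 lab P' d2' \<and> canon P' = P' \<and> simC S T F l P' d1' d2'"
proof -
  from st obtain Q0 c0 K e a O1 c1 where
    s: "stepC S T F l Q0 c0 (K, e, a) O1 c1" and P: "P = canon Q0" and d1: "d1 = rename c0 (alpha Q0)"
    and lab: "lab = (lift (alpha Q0) ` K, a)"
    and P': "P' = delta_abs canon (canon Q0) (lift (alpha Q0) ` K) a"
    and d1': "d1' = rename c1 ((oldf (canon Q0) (lift (alpha Q0) ` K) a \<circ> alpha Q0)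
                          (e := newf (canon Q0) (lift (alpha Q0) ` K) a))"
    unfolding stepAC_def by blast
  note sD = stepC_D[OF s]
  have wf0: "wf_poset Q0" using sD(1) by (simp add: pmarking_def)
  note ac = AS_canon[OF AS wf0]
  define \<tau> where "\<tau> = inv_into (names Q0) (alpha Q0)"
  have nP: "names P = alpha Q0 ` names Q0" using ac(2) P by simp
  have injt: "inj_on \<tau> (names P)" unfolding \<tau>_def nP by (rule inj_on_inv_into) simp
  have ta: "\<forall>x\<in>names Q0. (\<tau> \<circ> alpha Q0) x = x" using ac(3) unfolding \<tau>_def by simp
  have at: "\<forall>y\<in>names P. (alpha Q0 \<circ> \<tau>) y = y" unfolding nP \<tau>_def by (simp add: f_inv_into_f)
  have "simC S T F l (pimg \<tau> P) (rename d1 \<tau>) (rename d2 \<tau>)" by (rule simC_pimg[OF inf injt sim])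
  moreover have "pimg \<tau> P = Q0" unfolding P ac(2) pimg_comp by (rule pimg_id_on[OF wf0 ta])
  moreover have "rename d1 \<tau> = c0" unfolding d1 rename_comp by (rule rename_id_on[OF sD(1) ta])
  ultimately have sim0: "simC S T F l Q0 c0 (rename d2 \<tau>)" by simp
  obtain c2' where c2': "stepC S T F l Q0 (rename d2 \<tau>) (K, e, a) O1 c2'" "simC S T F l O1 c1 c2'"
    using simC_match[OF sim0 s] by blast
  have pm2: "pmarking S P d2" using simC_pm[OF sim] by simp
  have d2: "rename (rename d2 \<tau>) (alpha Q0) = d2" unfolding rename_comp by (rule rename_id_on[OF pm2 at])
  define \<beta> where "\<beta> = (oldf (canon Q0) (lift (alpha Q0) ` K) a \<circ> alpha Q0)(e := newf (canon Q0) (lift (alpha Q0) ` K) a)"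
  note bl = BL[OF AS inf s, folded \<beta>_def]
  have "stepAC S T F l canon alpha newf oldf P d2 lab P' (rename c2' \<beta>)"
    unfolding stepAC_def
    by (rule exI[of _ Q0], rule exI[of _ "rename d2 \<tau>"], rule exI[of _ K], rule exI[of _ e],
        rule exI[of _ a], rule exI[of _ O1], rule exI[of _ c2'])
       (use c2'(1) P d2 lab P' \<beta>_def in auto)
  moreover have "simC S T F l P' d1' (rename c2' \<beta>)"
    using simC_pimg[OF inf bl(1) c2'(2)] bl(2) P' d1' \<beta>_def by simp
  moreover have "canon P' = P'" using bl(3) P' by simp
  ultimately show ?thesis by blast
qed


definition Rp where
  "Rp S T F l canon alpha newf oldf Q c1 c2 \<longleftrightarrow> pmarking S Q c1 \<and> pmarking S Q c2 \<and>
     (\<exists>\<beta> P. inj_on \<beta> (names Q) \<and> pimg \<beta> Q = P \<and> simAC S T F l canon alpha newf oldf P (rename c1 \<beta>) (rename c2 \<beta>))"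

lemma Rp_sym: "Rp S T F l canon alpha newf oldf Q c1 c2 \<Longrightarrow> Rp S T F l canon alpha newf oldf Q c2 c1"
  unfolding Rp_def using simAC_sym by blast

lemma H2:
  assumes AS: "abstract_setting canon alpha newf oldf" and inf: "infinite (UNIV :: 'e set)"
    and R: "Rp S T F l canon alpha newf oldf (Q :: ('e,'a) poset) c1 c2"
    and st: "stepC S T F l Q c1 lab O1 c1'"
  shows "\<exists>c2'. stepC S T F l Q c2 lab O1 c2' \<and> Rp S T F l canon alpha newf oldf O1 c1' c2'"
proof -
  obtain K e a where lab: "lab = (K, e, a)" by (cases lab) auto
  note st = st[unfolded lab]
  from R obtain \<beta> P where pm2: "pmarking S Q c2" and injb: "inj_on \<beta> (names Q)" and P: "pimg \<beta> Q = P"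
    and sa: "simAC S T F l canon alpha newf oldf P (rename c1 \<beta>) (rename c2 \<beta>)"
    unfolding Rp_def by blast
  note sD = stepC_D[OF st]
  have wf: "wf_poset Q" using sD(1) by (simp add: pmarking_def)
  have cP: "canon P = P" and pmP: "pmarking S P (rename c1 \<beta>)" using simAC_D[OF sa] by auto
  have wfP: "wf_poset P" using pmP by (simp add: pmarking_def)
  note acP = AS_canon[OF AS wfP, unfolded cP]
  have nP: "names P = \<beta> ` names Q" using P by auto
  have nPa: "names P = alpha P ` names P" using acP(2) by (metis names_pimg)
  define \<tau> where "\<tau> = inv_into (names P) (alpha P)"
  have injt: "inj_on \<tau> (names P)" unfolding \<tau>_def by (rule inj_on_inv_into) (use nPa in simp)
  have tin: "\<tau> y \<in> names P" if "y \<in> names P" for y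
    unfolding \<tau>_def using that nPa by (metis inv_into_into)
  have at: "alpha P (\<tau> y) = y" if "y \<in> names P" for y
    unfolding \<tau>_def using that nPa by (metis f_inv_into_f)
  have ta: "\<tau> (alpha P y) = y" if "y \<in> names P" for y
    unfolding \<tau>_def using that acP(3) by simp
  obtain e0 where e0: "e0 \<notin> names P" using fresh[OF inf wfP] by blast
  define \<sigma> where "\<sigma> = (\<tau> \<circ> \<beta>)(e := e0)"
  have injtb: "inj_on (\<tau> \<circ> \<beta>) (names Q)" by (rule comp_inj_on[OF injb]) (use injt nP in simp)
  have e0': "e0 \<notin> (\<tau> \<circ> \<beta>) ` names Q" using e0 tin nP by auto
  have injs: "inj_on \<sigma> (insert e (names Q))" unfolding \<sigma>_def by (rule inj_upd[OF injtb sD(3) e0'])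
  have sQ: "\<forall>x\<in>names Q. \<sigma> x = \<tau> (\<beta> x)" using sD(3) unfolding \<sigma>_def by auto
  have asb: "\<forall>x\<in>names Q. (alpha P \<circ> \<sigma>) x = \<beta> x" using sQ at nP by auto
  note it = stepC_iso[OF st injs]
  have PsQ: "pimg \<sigma> Q = P"
  proof -
    have "pimg \<sigma> Q = pimg (\<tau> \<circ> \<beta>) Q" by (rule pimg_cong[OF wf]) (use sQ in simp)
    also have "\<dots> = pimg \<tau> P" using P pimg_comp by metis
    also have "\<dots> = pimg \<tau> (pimg (alpha P) P)" using acP(2) by simp
    also have "\<dots> = P" unfolding pimg_comp by (rule pimg_id_on[OF wfP]) (simp add: ta)
    finally show ?thesis .
  qed
  define K0 where "K0 = lift \<sigma> ` K"
  define O0 where "O0 = delta P K0 e0 a"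
  have st0: "stepC S T F l P (rename c1 \<sigma>) (K0, e0, a) O0 (rename c1' \<sigma>)"
    using it(1) unfolding PsQ K0_def O0_def by (simp add: \<sigma>_def)
  have pO1: "pimg \<sigma> O1 = O0" using it(2) unfolding PsQ K0_def O0_def by (simp add: \<sigma>_def)
  have r1: "rename (rename c1 \<sigma>) (alpha P) = rename c1 \<beta>"
    unfolding rename_comp by (rule rename_cong[OF sD(1) asb])
  define K' where "K' = lift \<beta> ` K"
  have KK: "lift (alpha P) ` K0 = K'"
  proof -
    have "lift (alpha P) ` K0 = lift (alpha P \<circ> \<sigma>) ` K" unfolding K0_def image_image lift_comp by simp
    also have "\<dots> = K'" unfolding K'_def by (rule image_lift_cong[OF sD(4) asb])
    finally show ?thesis .
  qed
  define \<beta>0 where "\<beta>0 = (oldf P K' a \<circ> alpha P)(e0 := newf P K' a)"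
  define P' where "P' = delta_abs canon P K' a"
  note bl = BL[OF AS inf st0, unfolded cP KK, folded \<beta>0_def P'_def]
  have sa1: "stepAC S T F l canon alpha newf oldf P (rename c1 \<beta>) (K', a) P' (rename (rename c1' \<sigma>) \<beta>0)"
    unfolding stepAC_def
    by (rule exI[of _ P], rule exI[of _ "rename c1 \<sigma>"], rule exI[of _ K0], rule exI[of _ e0],
        rule exI[of _ a], rule exI[of _ O0], rule exI[of _ "rename c1' \<sigma>"])
       (use st0 cP r1 KK \<beta>0_def P'_def in auto)
  obtain d2' where d2': "stepAC S T F l canon alpha newf oldf P (rename c2 \<beta>) (K', a) P' d2'"
    "simAC S T F l canon alpha newf oldf P' (rename (rename c1' \<sigma>) \<beta>0) d2'"
    using simAC_match[OF sa sa1] by blast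
  from d2'(1) obtain Q1 c0 K1 e1 a1 O2 c2'' where
    s1: "stepC S T F l Q1 c0 (K1, e1, a1) O2 c2''" and P1: "P = canon Q1" and c0: "rename c2 \<beta> = rename c0 (alpha Q1)"
    and lab1: "(K', a) = (lift (alpha Q1) ` K1, a1)"
    and dd: "d2' = rename c2'' ((oldf (canon Q1) (lift (alpha Q1) ` K1) a1 \<circ> alpha Q1)
                          (e1 := newf (canon Q1) (lift (alpha Q1) ` K1) a1))"
    unfolding stepAC_def by blast
  have a1: "a1 = a" and K1: "lift (alpha Q1) ` K1 = K'" using lab1 by auto
  note s1 = s1[unfolded a1]
  have dd: "d2' = rename c2'' ((oldf P K' a \<circ> alpha Q1)(e1 := newf P K' a))"
    using dd P1 K1 a1 by simp
  note sD1 = stepC_D[OF s1]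
  have wf1: "wf_poset Q1" using sD1(1) by (simp add: pmarking_def)
  note ac1 = AS_canon[OF AS wf1, folded P1]
  have nP1: "names P = alpha Q1 ` names Q1" using ac1(2) by (metis names_pimg)
  define \<iota> where "\<iota> = inv_into (names Q) \<beta>"
  have injI: "inj_on \<iota> (names P)" unfolding \<iota>_def nP by (rule inj_on_inv_into) simp
  have Iin: "\<iota> y \<in> names Q" if "y \<in> names P" for y unfolding \<iota>_def using that nP by (metis inv_into_into)
  have bI: "\<beta> (\<iota> y) = y" if "y \<in> names P" for y unfolding \<iota>_def using that nP by (metis f_inv_into_f)
  have Ib: "\<iota> (\<beta> x) = x" if "x \<in> names Q" for x unfolding \<iota>_def using that injb by simp
  define \<rho> where "\<rho> = (\<iota> \<circ> alpha Q1)(e1 := e)"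
  have injIa: "inj_on (\<iota> \<circ> alpha Q1) (names Q1)" by (rule comp_inj_on[OF ac1(3)]) (use injI nP1 in simp)
  have e': "e \<notin> (\<iota> \<circ> alpha Q1) ` names Q1" using sD(3) Iin nP1 by auto
  have injr: "inj_on \<rho> (insert e1 (names Q1))" unfolding \<rho>_def by (rule inj_upd[OF injIa sD1(3) e'])
  have rQ: "\<forall>x\<in>names Q1. \<rho> x = \<iota> (alpha Q1 x)" using sD1(3) unfolding \<rho>_def by auto
  note it1 = stepC_iso[OF s1 injr]
  have PQ: "pimg \<rho> Q1 = Q"
  proof -
    have "pimg \<rho> Q1 = pimg (\<iota> \<circ> alpha Q1) Q1" by (rule pimg_cong[OF wf1]) (use rQ in simp)
    also have "\<dots> = pimg \<iota> P" using ac1(2) pimg_comp by metis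
    also have "\<dots> = pimg \<iota> (pimg \<beta> Q)" using P by simp
    also have "\<dots> = Q" unfolding pimg_comp by (rule pimg_id_on[OF wf]) (simp add: Ib)
    finally show ?thesis .
  qed
  have rc: "rename c0 \<rho> = c2"
  proof -
    have "rename c0 \<rho> = rename c0 (\<iota> \<circ> alpha Q1)" by (rule rename_cong[OF sD1(1)]) (use rQ in simp)
    also have "\<dots> = rename (rename c2 \<beta>) \<iota>" using c0 rename_comp by metis
    also have "\<dots> = c2" unfolding rename_comp by (rule rename_id_on[OF pm2]) (simp add: Ib)
    finally show ?thesis .
  qed
  have rK: "lift \<rho> ` K1 = K"
  proof -
    have "lift \<rho> ` K1 = lift (\<iota> \<circ> alpha Q1) ` K1" by (rule image_lift_cong[OF sD1(4)]) (use rQ in simp)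
    also have "\<dots> = lift \<iota> ` K'" unfolding K1[symmetric] image_image lift_comp by simp
    also have "\<dots> = lift (\<iota> \<circ> \<beta>) ` K" unfolding K'_def image_image lift_comp by simp
    also have "\<dots> = lift id ` K" by (rule image_lift_cong[OF sD(4)]) (simp add: Ib)
    also have "\<dots> = K" by (simp add: lift_def)
    finally show ?thesis .
  qed
  have st2: "stepC S T F l Q c2 (K, e, a) O1 (rename c2'' \<rho>)"
    using it1(1) unfolding PQ rc rK sD(5) by (simp add: \<rho>_def)
  define \<beta>' where "\<beta>' = \<beta>0 \<circ> \<sigma>"
  have injb': "inj_on \<beta>' (names O1)" unfolding \<beta>'_def
  proof (rule comp_inj_on)
    show "inj_on \<sigma> (names O1)" using injs sD(5) by simp
    have "\<sigma> ` names O1 = names O0" using pO1 by (metis names_pimg)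
    then show "inj_on \<beta>0 (\<sigma> ` names O1)" using bl(1) by simp
  qed
  have pb': "pimg \<beta>' O1 = P'" unfolding \<beta>'_def using pO1 bl(2) pimg_comp by metis
  have r1': "rename c1' \<beta>' = rename (rename c1' \<sigma>) \<beta>0" unfolding \<beta>'_def rename_comp ..
  have r2': "rename (rename c2'' \<rho>) \<beta>' = d2'"
    unfolding dd rename_comp
  proof (rule rename_cong[OF sD1(2)], rule ballI)
    fix x assume "x \<in> names O2"
    then have "x = e1 \<or> x \<in> names Q1" using sD1(5) by simp
    then show "(\<beta>' \<circ> \<rho>) x = ((oldf P K' a \<circ> alpha Q1)(e1 := newf P K' a)) x"
    proof
      assume "x = e1" then show ?thesis by (simp add: \<beta>'_def \<rho>_def \<sigma>_def \<beta>0_def)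
    next
      assume x: "x \<in> names Q1"
      have ne: "x \<noteq> e1" using x sD1(3) by auto
      have ax: "alpha Q1 x \<in> names P" using x nP1 by auto
      have rx: "\<rho> x = \<iota> (alpha Q1 x)" using rQ x by simp
      have rxQ: "\<rho> x \<in> names Q" using rx Iin ax by simp
      have "\<sigma> (\<rho> x) = \<tau> (alpha Q1 x)" using sQ rxQ rx bI ax by simp
      moreover have "\<tau> (alpha Q1 x) \<noteq> e0" using tin ax e0 by auto
      ultimately have "\<beta>' (\<rho> x) = oldf P K' a (alpha P (\<tau> (alpha Q1 x)))" by (simp add: \<beta>'_def \<beta>0_def)
      also have "\<dots> = oldf P K' a (alpha Q1 x)" using at ax by simp
      finally show ?thesis using ne by simp
    qed
  qed
  have pmc2: "pmarking S O1 (rename c2'' \<rho>)" using stepC_D(2)[OF st2] .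
  have "Rp S T F l canon alpha newf oldf O1 c1' (rename c2'' \<rho>)"
    unfolding Rp_def using sD(2) pmc2 injb' pb' d2'(2) r1' r2' by auto
  then show ?thesis using st2 lab by blast
qed


theorem theorem1:
  fixes S T :: "'n set" and F :: "('n \<times> 'n) set" and l :: "'n \<Rightarrow> 'a"
    and canon :: "('e,'a) poset \<Rightarrow> ('e,'a) poset"
    and alpha :: "('e,'a) poset \<Rightarrow> 'e \<Rightarrow> 'e"
    and newf :: "('e,'a) poset \<Rightarrow> ('e \<times> 'a) set \<Rightarrow> 'a \<Rightarrow> 'e"
    and oldf :: "('e,'a) poset \<Rightarrow> ('e \<times> 'a) set \<Rightarrow> 'a \<Rightarrow> 'e \<Rightarrow> 'e"
    and Q :: "('e,'a) poset" and c1 c2 :: "('e,'a,'n) cmarking"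
  assumes "infinite (UNIV :: 'e set)"
    and "is_net S T F"
    and "abstract_setting canon alpha newf oldf"
    and "pmarking S Q c1" and "pmarking S Q c2"
  shows "simC S T F l Q c1 c2 \<longleftrightarrow>
         simAC S T F l canon alpha newf oldf (canon Q) (rename c1 (alpha Q)) (rename c2 (alpha Q))"
proof
  note inf = assms(1) and AS = assms(3)
  have wf: "wf_poset Q" using assms(4) by (simp add: pmarking_def)
  note ac = AS_canon[OF AS wf]
  assume sim: "simC S T F l Q c1 c2"
  define R where "R = (\<lambda>P. {(d1,d2). canon P = P \<and> simC S T F l (P :: ('e,'a) poset) d1 d2})"
  have "bisimAC S T F l canon alpha newf oldf R"
    unfolding bisimAC_def
  proof (intro allI impI)
    fix P d1 d2 assume "(d1, d2) \<in> R P"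
    then have cP: "canon P = P" and s: "simC S T F l P d1 d2" unfolding R_def by auto
    have fw: "\<forall>lab P' d1'. stepAC S T F l canon alpha newf oldf P d1 lab P' d1' \<longrightarrow>
             (\<exists>d2'. stepAC S T F l canon alpha newf oldf P d2 lab P' d2' \<and> (d1', d2') \<in> R P')"
      using H1[OF AS inf s] unfolding R_def by blast
    have bw: "\<forall>lab P' d2'. stepAC S T F l canon alpha newf oldf P d2 lab P' d2' \<longrightarrow>
             (\<exists>d1'. stepAC S T F l canon alpha newf oldf P d1 lab P' d1' \<and> (d1', d2') \<in> R P')"
      using H1[OF AS inf simC_sym[OF s]] simC_sym unfolding R_def by blast
    show "canon P = P \<and> pmarking S P d1 \<and> pmarking S P d2 \<and>
        (\<forall>lab P' d1'. stepAC S T F l canon alpha newf oldf P d1 lab P' d1' \<longrightarrow>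
             (\<exists>d2'. stepAC S T F l canon alpha newf oldf P d2 lab P' d2' \<and> (d1', d2') \<in> R P')) \<and>
        (\<forall>lab P' d2'. stepAC S T F l canon alpha newf oldf P d2 lab P' d2' \<longrightarrow>
             (\<exists>d1'. stepAC S T F l canon alpha newf oldf P d1 lab P' d1' \<and> (d1', d2') \<in> R P'))"
      using cP simC_pm[OF s] fw bw by blast
  qed
  moreover have "(rename c1 (alpha Q), rename c2 (alpha Q)) \<in> R (canon Q)"
    unfolding R_def using ac(4) simC_pimg[OF inf ac(3) sim] ac(2) by simp
  ultimately show "simAC S T F l canon alpha newf oldf (canon Q) (rename c1 (alpha Q)) (rename c2 (alpha Q))"
    unfolding simAC_def by blast
next
  note inf = assms(1) and AS = assms(3)
  have wf: "wf_poset Q" using assms(4) by (simp add: pmarking_def)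
  note ac = AS_canon[OF AS wf]
  assume sa: "simAC S T F l canon alpha newf oldf (canon Q) (rename c1 (alpha Q)) (rename c2 (alpha Q))"
  define R where "R = (\<lambda>Q. {(c1,c2). Rp S T F l canon alpha newf oldf (Q :: ('e,'a) poset) c1 c2})"
  have "bisimC S T F l R"
    unfolding bisimC_def
  proof (intro allI impI)
    fix Q c1 c2 assume "(c1, c2) \<in> R Q"
    then have r: "Rp S T F l canon alpha newf oldf Q c1 c2" unfolding R_def by auto
    have fw: "\<forall>lab Q' c1'. stepC S T F l Q c1 lab Q' c1' \<longrightarrow>
             (\<exists>c2'. stepC S T F l Q c2 lab Q' c2' \<and> (c1', c2') \<in> R Q')"
      using H2[OF AS inf r] unfolding R_def by blast
    have bw: "\<forall>lab Q' c2'. stepC S T F l Q c2 lab Q' c2' \<longrightarrow>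
             (\<exists>c1'. stepC S T F l Q c1 lab Q' c1' \<and> (c1', c2') \<in> R Q')"
      using H2[OF AS inf Rp_sym[OF r]] Rp_sym unfolding R_def by blast
    show "pmarking S Q c1 \<and> pmarking S Q c2 \<and>
        (\<forall>lab Q' c1'. stepC S T F l Q c1 lab Q' c1' \<longrightarrow>
             (\<exists>c2'. stepC S T F l Q c2 lab Q' c2' \<and> (c1', c2') \<in> R Q')) \<and>
        (\<forall>lab Q' c2'. stepC S T F l Q c2 lab Q' c2' \<longrightarrow>
             (\<exists>c1'. stepC S T F l Q c1 lab Q' c1' \<and> (c1', c2') \<in> R Q'))"
      using r fw bw unfolding Rp_def by blast
  qed
  moreover have "(c1, c2) \<in> R Q"
    unfolding R_def Rp_def using assms(4,5) ac(3) ac(2) sa by auto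
  ultimately show "simC S T F l Q c1 c2" unfolding simC_def by blast
qed

end
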